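(* Let $g$ be a good probability density. Let $\mathbf Z=(Z_1,Z_2,\ldots)$ be i.i.d. with density $g$. Let $\mathbf X=(X_1,X_2,\ldots)$ be independent of $\mathbf Z$ with distribution absolutely continuous with respect to that of $\mathbf Z$. Let $\mathcal I=\{I_1,\ldots,I_d\}\subseteq\mathbb N$ be an a.s. finite (possibly empty) set of distinct indices chosen as a measurable function of $\mathbf X$, let $X^*=\max\{X_{I_1},\ldots,X_{I_d}\}$, and define $$Y_k=\begin{cases}2X^*+Z_j&\text{if }k=I_j\text{ for some }1\le j\le d,\\ X_k&\text{if }k\notin\mathcal I.\end{cases}$$ Then the distribution of $\mathbf Y=(Y_k)_{k\in\mathbb N}$ is absolutely continuous with respect to that of $\mathbf Z$.
   Context: A probability density $g$ is good if its support is $\mathbb{R}_+=[0,\infty)$ and for every $K>0$ there is a constant $C(K)$ with $\sup_{u\in(0,\infty),\,x\in(0,K]}g(u-x)/g(u)\le C(K)$ (with $g=0$ on $(-\infty,0)$). Example: the Exponential density. *)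

theory Defs
  imports "HOL-Probability.Probability"
begin

definition prob_density :: "(real \<Rightarrow> real) \<Rightarrow> bool" where
  "prob_density g \<longleftrightarrow> g \<in> borel_measurable borel \<and> (\<forall>u. 0 \<le> g u)
     \<and> integrable lborel g \<and> integral\<^sup>L lborel g = 1"

definition good_density :: "(real \<Rightarrow> real) \<Rightarrow> bool" where
  "good_density g \<longleftrightarrow> prob_density g
     \<and> (\<forall>u<0. g u = 0) \<and> (\<forall>u>0. g u > 0)
     \<and> (\<forall>K>0. \<exists>C. \<forall>u>0. \<forall>x\<in>{0<..K}. g (u - x) / g u \<le> C)"

abbreviation seq_space :: "(nat \<Rightarrow> real) measure" where
  "seq_space \<equiv> \<Pi>\<^sub>M i\<in>UNIV. borel"

abbreviation iid_law :: "(real \<Rightarrow> real) \<Rightarrow> (nat \<Rightarrow> real) measure" where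
  "iid_law g \<equiv> \<Pi>\<^sub>M i\<in>UNIV. density lborel (\<lambda>u. ennreal (g u))"

text \<open>The value None encodes the null event on which the index set is
  infinite; there Y is (arbitrarily) set to x. Z_j (1-based) is z (j-1).\<close>
definition Ymap :: "(nat \<Rightarrow> real) \<Rightarrow> (nat \<Rightarrow> real) \<Rightarrow> nat list option \<Rightarrow> nat \<Rightarrow> real" where
  "Ymap x z L k = (case L of None \<Rightarrow> x k
     | Some l \<Rightarrow> (if k \<in> set l
          then 2 * Max (x ` set l) + z (THE j. j < length l \<and> l ! j = k)
          else x k))"

end

theory Submission
  imports Defs
begin

lemma gd_meas: "good_density g \<Longrightarrow> g \<in> borel_measurable borel"
  by (simp add: good_density_def prob_density_def)

lemma gd_prob: assumes "good_density g"
  shows "prob_space (density lborel (\<lambda>u. ennreal (g u)))"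
proof (rule prob_spaceI)
  have g: "g \<in> borel_measurable borel" "\<And>u. 0 \<le> g u" "integrable lborel g" "integral\<^sup>L lborel g = 1"
    using assms by (auto simp: good_density_def prob_density_def)
  have "(\<integral>\<^sup>+ x. ennreal (g x) \<partial>lborel) = ennreal (integral\<^sup>L lborel g)"
    using g by (intro nn_integral_eq_integral) auto
  then show "emeasure (density lborel (\<lambda>u. ennreal (g u))) (space (density lborel (\<lambda>u. ennreal (g u)))) = 1"
    using g by (simp add: emeasure_density)
qed

lemma iid_prob: "good_density g \<Longrightarrow> prob_space (iid_law g)"
  by (intro prob_space_PiM gd_prob)

lemma sets_iid: "sets (iid_law g) = sets seq_space"
  by (intro sets_PiM_cong) auto

lemma space_iid: "space (iid_law g) = space seq_space"
  by (rule sets_eq_imp_space_eq[OF sets_iid])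

lemma AE_G_nonneg: assumes "good_density g"
  shows "AE v in density lborel (\<lambda>u. ennreal (g u)). 0 \<le> v"
proof -
  have "\<forall>u<0. g u = 0" using assms by (simp add: good_density_def)
  then have "AE v in lborel. 0 < ennreal (g v) \<longrightarrow> 0 \<le> v"
    by (intro AE_I2) (metis ennreal_eq_0_iff less_irrefl not_le)
  then show ?thesis using gd_meas[OF assms] by (subst AE_density) auto
qed

lemma AE_iid_nonneg: assumes "good_density g"
  shows "AE x in iid_law g. \<forall>k. 0 \<le> x k"
  unfolding AE_all_countable
  by (intro allI AE_PiM_component gd_prob assms AE_G_nonneg) auto

lemma shift_AE: assumes "good_density g" "0 \<le> c"
  and "AE v in density lborel (\<lambda>u. ennreal (g u)). P v"
  shows "AE v in density lborel (\<lambda>u. ennreal (g u)). P (c + v)"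
proof -
  have gz: "\<forall>u<0. g u = 0" using assms by (simp add: good_density_def)
  have gp: "\<forall>u>0. g u > 0" using assms by (simp add: good_density_def)
  have "AE v in lborel. 0 < ennreal (g v) \<longrightarrow> P v"
    using assms(3) gd_meas[OF assms(1)] by (subst (asm) AE_density) auto
  then have "AE v in lborel. 0 < v \<longrightarrow> P v"
    by eventually_elim (use gp in auto)
  then have "AE v in distr lborel borel ((+) c). 0 < v \<longrightarrow> P v"
    by (simp only: lborel_distr_plus[where 'a=real])
  then have "AE v in lborel. 0 < c + v \<longrightarrow> P (c + v)"
    by (rule AE_distrD[rotated]) simp
  then have "AE v in lborel. 0 < ennreal (g v) \<longrightarrow> P (c + v)"
    using AE_lborel_singleton[of 0]
  proof eventually_elim
    case (elim v)
    show ?case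
    proof
      assume "0 < ennreal (g v)"
      then have "g v > 0" by simp
      then have "\<not> v < 0" using gz by force
      with elim assms(2) show "P (c + v)" by auto
    qed
  qed
  then show ?thesis using gd_meas[OF assms(1)] by (subst AE_density) auto
qed

lemma meas_upd: "f \<in> M \<rightarrow>\<^sub>M seq_space \<Longrightarrow> h \<in> borel_measurable M \<Longrightarrow>
   (\<lambda>x. (f x)(k := h x)) \<in> M \<rightarrow>\<^sub>M seq_space"
proof -
  assume f: "f \<in> M \<rightarrow>\<^sub>M seq_space" and h: "h \<in> borel_measurable M"
  have "(\<lambda>x i. if i = k then h x else f x i) \<in> M \<rightarrow>\<^sub>M seq_space"
  proof (rule measurable_PiM_single')
    fix i :: nat
    have "(\<lambda>x. f x i) \<in> borel_measurable M"
      using f by (rule measurable_compose) (rule measurable_component_singleton, simp)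
    then show "(\<lambda>x. if i = k then h x else f x i) \<in> borel_measurable M" using h by simp
  qed (auto simp: space_PiM)
  then show ?thesis by (simp add: fun_upd_def)
qed

lemma pred_notin: "h \<in> M \<rightarrow>\<^sub>M S \<Longrightarrow> N \<in> sets S \<Longrightarrow> {x \<in> space M. h x \<notin> N} \<in> sets M"
proof -
  assume h: "h \<in> M \<rightarrow>\<^sub>M S" and N: "N \<in> sets S"
  have "{x \<in> space M. h x \<notin> N} = space M - (h -` N \<inter> space M)" by auto
  then show ?thesis using measurable_sets[OF h N] by auto
qed

lemma ns_AE:
  assumes F: "F \<in> L \<rightarrow>\<^sub>M \<mu>"
  and ns: "\<And>N. N \<in> null_sets \<mu> \<Longrightarrow> AE p in L. F p \<notin> N"
  and P: "AE y in \<mu>. P y"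
  shows "AE p in L. P (F p)"
proof -
  from P obtain N0 where N0: "{y\<in>space \<mu>. \<not> P y} \<subseteq> N0" "N0 \<in> null_sets \<mu>"
    unfolding eventually_ae_filter by auto
  have "AE p in L. F p \<notin> N0" by (rule ns[OF N0(2)])
  then show ?thesis using AE_space
  proof eventually_elim
    case (elim p)
    then have "F p \<in> space \<mu>" using measurable_space[OF F] by auto
    with elim N0(1) show ?case by blast
  qed
qed

lemma base_eq: assumes "good_density g"
  shows "distr (density lborel (\<lambda>u. ennreal (g u)) \<Otimes>\<^sub>M iid_law g) (iid_law g) (\<lambda>(v, z). z(n := v)) = iid_law g"
  using distr_pair_PiM_eq_PiM[of UNIV "\<lambda>_. density lborel (\<lambda>u. ennreal (g u))" n]
    gd_prob[OF assms] by simp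

lemma meas_iid_iff: "(f \<in> M \<rightarrow>\<^sub>M iid_law g) = (f \<in> M \<rightarrow>\<^sub>M seq_space)"
  using measurable_cong_sets[OF refl sets_iid, of M g] by simp

lemma stepA:
  fixes F :: "(nat \<Rightarrow> real) \<times> (nat \<Rightarrow> real) \<Rightarrow> nat \<Rightarrow> real"
  assumes g: "good_density g"
  and F: "F \<in> (iid_law g \<Otimes>\<^sub>M iid_law g) \<rightarrow>\<^sub>M seq_space"
  and c: "c \<in> borel_measurable (iid_law g)" "AE x in iid_law g. 0 \<le> c x"
  and ns: "\<And>N. N \<in> null_sets (iid_law g) \<Longrightarrow> AE p in iid_law g \<Otimes>\<^sub>M iid_law g. F p \<notin> N"
  and N: "N \<in> null_sets (iid_law g)"
  shows "AE q in iid_law g \<Otimes>\<^sub>M (density lborel (\<lambda>u. ennreal (g u)) \<Otimes>\<^sub>M iid_law g).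
           (F (fst q, snd (snd q)))(k := c (fst q) + fst (snd q)) \<notin> N"
proof -
  define G where "G = density lborel (\<lambda>u. ennreal (g u))"
  define \<mu> where "\<mu> = iid_law g"
  interpret G: prob_space G unfolding G_def by (rule gd_prob[OF g])
  interpret mu: prob_space \<mu> unfolding \<mu>_def by (rule iid_prob[OF g])
  interpret Gmu: pair_prob_space G \<mu> ..
  interpret muG: pair_prob_space \<mu> G ..
  interpret mumu: pair_prob_space \<mu> \<mu> ..
  interpret GmuP: prob_space "G \<Otimes>\<^sub>M \<mu>" by (rule Gmu.prob_space_axioms)
  interpret mumuG: pair_prob_space \<mu> "G \<Otimes>\<^sub>M \<mu>" ..
  have Nsets: "N \<in> sets seq_space" using N sets_iid unfolding \<mu>_def by (auto dest: null_setsD2)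
  have F': "F \<in> (\<mu> \<Otimes>\<^sub>M \<mu>) \<rightarrow>\<^sub>M \<mu>" using F unfolding \<mu>_def by (simp add: meas_iid_iff)
  have sG: "sets G = sets borel" unfolding G_def by simp
  have smu: "sets \<mu> = sets seq_space" unfolding \<mu>_def by (rule sets_iid)
  have c': "c \<in> borel_measurable \<mu>" using c unfolding \<mu>_def by simp
  have snd1: "snd \<in> (G \<Otimes>\<^sub>M \<mu>) \<rightarrow>\<^sub>M seq_space"
    using measurable_snd[of G \<mu>] unfolding \<mu>_def by (simp add: meas_iid_iff)
  have fst1: "fst \<in> borel_measurable (G \<Otimes>\<^sub>M \<mu>)"
    by (subst measurable_cong_sets[OF refl sG, symmetric]) (rule measurable_fst)
  have mupd: "(\<lambda>q. (snd q)(k := fst q)) \<in> (G \<Otimes>\<^sub>M \<mu>) \<rightarrow>\<^sub>M seq_space"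
    by (intro meas_upd snd1 fst1)
  have "AE y in \<mu>. y \<notin> N" using N unfolding \<mu>_def by (rule AE_not_in)
  then have "AE y in distr (G \<Otimes>\<^sub>M \<mu>) \<mu> (\<lambda>(v, z). z(k := v)). y \<notin> N"
    unfolding G_def \<mu>_def by (simp only: base_eq[OF g, of k])
  then have "AE q in G \<Otimes>\<^sub>M \<mu>. (case q of (v, z) \<Rightarrow> z(k := v)) \<notin> N"
    by (rule AE_distrD[rotated]) (use mupd in \<open>simp add: split_beta' meas_iid_iff \<mu>_def\<close>)
  then have "AE v in G. AE y in \<mu>. y(k := v) \<notin> N"
    by (rule Gmu.AE_pair[where Q="\<lambda>q. (case q of (v, z) \<Rightarrow> z(k := v)) \<notin> N", simplified])
  have A1: "AE y in \<mu>. AE v in G. y(k := v) \<notin> N"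
  proof -
    have "(AE v in G. AE y in \<mu>. y(k := v) \<notin> N) = (AE y in \<mu>. AE v in G. y(k := v) \<notin> N)"
      by (rule Gmu.AE_commute) (use pred_notin[OF mupd Nsets] in simp)
    then show ?thesis using \<open>AE v in G. AE y in \<mu>. y(k := v) \<notin> N\<close> by simp
  qed
  have A2: "AE p in \<mu> \<Otimes>\<^sub>M \<mu>. AE v in G. (F p)(k := v) \<notin> N"
    by (rule ns_AE[OF F' ns[folded \<mu>_def] A1])
  have A3: "AE x in \<mu>. AE z in \<mu>. AE v in G. (F (x, z))(k := v) \<notin> N"
    by (rule mumu.AE_pair[OF A2])
  have A4: "AE x in \<mu>. AE z in \<mu>. AE v in G. (F (x, z))(k := c x + v) \<notin> N"
    using A3 c(2)[folded \<mu>_def]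
  proof eventually_elim
    case (elim x)
    from elim(1) show ?case
    proof eventually_elim
      case (elim z)
      then show ?case using shift_AE[OF g \<open>0 \<le> c x\<close>, of "\<lambda>v. (F (x, z))(k := v) \<notin> N"]
        unfolding G_def by simp
    qed
  qed
  have A5: "AE x in \<mu>. AE q in G \<Otimes>\<^sub>M \<mu>. (F (x, snd q))(k := c x + fst q) \<notin> N"
    using A4 AE_space
  proof eventually_elim
    case (elim x)
    have x: "x \<in> space \<mu>" using elim(2) .
    have sndG: "snd \<in> borel_measurable (\<mu> \<Otimes>\<^sub>M G)"
      by (subst measurable_cong_sets[OF refl sG, symmetric]) (rule measurable_snd)
    have m1: "(\<lambda>q. (F (x, fst q))(k := c x + snd q)) \<in> (\<mu> \<Otimes>\<^sub>M G) \<rightarrow>\<^sub>M seq_space"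
      apply (rule meas_upd)
       apply (rule measurable_compose[OF _ F[folded \<mu>_def]])
       apply (rule measurable_Pair[OF measurable_const[OF x] measurable_fst])
      apply (rule borel_measurable_add[OF borel_measurable_const sndG])
      done
    have m2: "(\<lambda>q. (F (x, snd q))(k := c x + fst q)) \<in> (G \<Otimes>\<^sub>M \<mu>) \<rightarrow>\<^sub>M seq_space"
      apply (rule meas_upd)
       apply (rule measurable_compose[OF _ F[folded \<mu>_def]])
       apply (rule measurable_Pair[OF measurable_const[OF x] measurable_snd])
      apply (rule borel_measurable_add[OF borel_measurable_const fst1])
      done
    have "AE v in G. AE z in \<mu>. (F (x, z))(k := c x + v) \<notin> N"
      using muG.AE_commute[of "\<lambda>z v. (F (x, z))(k := c x + v) \<notin> N"] pred_notin[OF m1 Nsets] elim(1)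
      by simp
    then show ?case
      by (intro Gmu.AE_pair_measure) (use pred_notin[OF m2 Nsets] in auto)
  qed
  have m3: "(\<lambda>q. (F (fst q, snd (snd q)))(k := c (fst q) + fst (snd q))) \<in> (\<mu> \<Otimes>\<^sub>M (G \<Otimes>\<^sub>M \<mu>)) \<rightarrow>\<^sub>M seq_space"
    apply (rule meas_upd)
     apply (rule measurable_compose[OF _ F[folded \<mu>_def]])
     apply (rule measurable_Pair[OF measurable_fst measurable_compose[OF measurable_snd measurable_snd]])
    apply (rule borel_measurable_add[OF measurable_compose[OF measurable_fst c'] measurable_compose[OF measurable_snd fst1]])
    done
  have "AE q in \<mu> \<Otimes>\<^sub>M (G \<Otimes>\<^sub>M \<mu>). (F (fst q, snd (snd q)))(k := c (fst q) + fst (snd q)) \<notin> N"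
    by (rule mumuG.AE_pair_measure) (use pred_notin[OF m3 Nsets] A5 in auto)
  then show ?thesis unfolding \<mu>_def G_def .
qed

definition cmax :: "nat list \<Rightarrow> (nat \<Rightarrow> real) \<Rightarrow> real" where
  "cmax l x = 2 * Max (x ` set l)"

definition posl :: "nat list \<Rightarrow> nat \<Rightarrow> nat" where
  "posl l k = (THE j. j < length l \<and> l ! j = k)"

definition Phi :: "nat list \<Rightarrow> nat \<Rightarrow> (nat \<Rightarrow> real) \<times> (nat \<Rightarrow> real) \<Rightarrow> nat \<Rightarrow> real" where
  "Phi l n p = (\<lambda>k. if k \<in> set (take n l) then cmax l (fst p) + snd p (posl l k) else fst p k)"

lemma posl_nth: "distinct l \<Longrightarrow> j < length l \<Longrightarrow> posl l (l ! j) = j"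
  unfolding posl_def by (rule the_equality) (auto simp: nth_eq_iff_index_eq)

lemma Phi_step: assumes "distinct l" "n < length l"
  shows "Phi l (Suc n) (x, z(n := v)) = (Phi l n (x, z))(l ! n := cmax l x + v)"
proof
  fix k
  have tk: "take (Suc n) l = take n l @ [l ! n]" using assms(2) by (simp add: take_Suc_conv_app_nth)
  show "Phi l (Suc n) (x, z(n := v)) k = ((Phi l n (x, z))(l ! n := cmax l x + v)) k"
  proof (cases "k = l ! n")
    case True
    then show ?thesis using assms by (simp add: Phi_def tk posl_nth)
  next
    case False
    show ?thesis
    proof (cases "k \<in> set (take n l)")
      case True
      then obtain j where j: "j < n" "k = l ! j" using assms(2)
        by (auto simp: in_set_conv_nth)
      then show ?thesis using assms False True by (simp add: Phi_def tk posl_nth)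
    next
      case False2: False
      then show ?thesis using False by (simp add: Phi_def tk)
    qed
  qed
qed

lemma cmax_meas: "cmax l \<in> borel_measurable seq_space"
  unfolding cmax_def by measurable

lemma cmax_meas_iid: "cmax l \<in> borel_measurable (iid_law g)"
  using cmax_meas measurable_cong_sets[OF sets_iid refl, of g borel] by simp

lemma Phi_meas: "Phi l n \<in> (iid_law g \<Otimes>\<^sub>M iid_law g) \<rightarrow>\<^sub>M seq_space"
proof -
  have f: "fst \<in> (iid_law g \<Otimes>\<^sub>M iid_law g) \<rightarrow>\<^sub>M seq_space"
    using measurable_fst meas_iid_iff by blast
  have s: "snd \<in> (iid_law g \<Otimes>\<^sub>M iid_law g) \<rightarrow>\<^sub>M seq_space"
    using measurable_snd meas_iid_iff by blast
  have comp: "\<And>h i. h \<in> (iid_law g \<Otimes>\<^sub>M iid_law g) \<rightarrow>\<^sub>M seq_space \<Longrightarrow> (\<lambda>p. h p i) \<in> borel_measurable (iid_law g \<Otimes>\<^sub>M iid_law g)"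
    by (erule measurable_compose) (rule measurable_component_singleton, simp)
  have cm: "(\<lambda>p. cmax l (fst p)) \<in> borel_measurable (iid_law g \<Otimes>\<^sub>M iid_law g)"
    by (rule measurable_compose[OF f cmax_meas])
  show ?thesis
    unfolding Phi_def
    apply (rule measurable_PiM_single')
    subgoal for k
      using comp[OF f, of k] comp[OF s, of "posl l k"] cm by simp
    apply (auto simp: space_PiM)
    done
qed

lemma pair_split: assumes g: "good_density g"
  shows "iid_law g \<Otimes>\<^sub>M iid_law g =
    distr (iid_law g \<Otimes>\<^sub>M (density lborel (\<lambda>u. ennreal (g u)) \<Otimes>\<^sub>M iid_law g)) (iid_law g \<Otimes>\<^sub>M iid_law g)
      (\<lambda>q. (fst q, (snd (snd q))(n := fst (snd q))))"
proof -
  define G where "G = density lborel (\<lambda>u. ennreal (g u))"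
  define \<mu> where "\<mu> = iid_law g"
  interpret G: prob_space G unfolding G_def by (rule gd_prob[OF g])
  interpret mu: prob_space \<mu> unfolding \<mu>_def by (rule iid_prob[OF g])
  interpret Gmu: pair_prob_space G \<mu> ..
  interpret GmuP: prob_space "G \<Otimes>\<^sub>M \<mu>" by (rule Gmu.prob_space_axioms)
  interpret mumuG: pair_prob_space \<mu> "G \<Otimes>\<^sub>M \<mu>" ..
  have sG: "sets G = sets borel" unfolding G_def by simp
  have snd1: "snd \<in> (G \<Otimes>\<^sub>M \<mu>) \<rightarrow>\<^sub>M \<mu>"
    by (rule measurable_snd)
  have fst1: "fst \<in> borel_measurable (G \<Otimes>\<^sub>M \<mu>)"
    by (subst measurable_cong_sets[OF refl sG, symmetric]) (rule measurable_fst)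
  have U: "(\<lambda>q. (snd q)(n := fst q)) \<in> (G \<Otimes>\<^sub>M \<mu>) \<rightarrow>\<^sub>M \<mu>"
  proof -
    have snd2: "snd \<in> (G \<Otimes>\<^sub>M \<mu>) \<rightarrow>\<^sub>M seq_space" using snd1 unfolding \<mu>_def meas_iid_iff .
    have "(\<lambda>q. (snd q)(n := fst q)) \<in> (G \<Otimes>\<^sub>M \<mu>) \<rightarrow>\<^sub>M seq_space" by (intro meas_upd fst1 snd2)
    then show ?thesis unfolding \<mu>_def meas_iid_iff .
  qed
  have T: "(\<lambda>q. (fst q, (snd (snd q))(n := fst (snd q)))) \<in> (\<mu> \<Otimes>\<^sub>M (G \<Otimes>\<^sub>M \<mu>)) \<rightarrow>\<^sub>M (\<mu> \<Otimes>\<^sub>M \<mu>)"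
    by (rule measurable_Pair[OF measurable_fst measurable_compose[OF measurable_snd U]])
  have base: "distr (G \<Otimes>\<^sub>M \<mu>) \<mu> (\<lambda>q. (snd q)(n := fst q)) = \<mu>"
    using base_eq[OF g, of n] unfolding G_def \<mu>_def by (simp add: split_beta')
  have "\<mu> \<Otimes>\<^sub>M \<mu> = distr (\<mu> \<Otimes>\<^sub>M (G \<Otimes>\<^sub>M \<mu>)) (\<mu> \<Otimes>\<^sub>M \<mu>) (\<lambda>q. (fst q, (snd (snd q))(n := fst (snd q))))"
  proof (rule pair_measure_eqI)
    show "sigma_finite_measure \<mu>" by unfold_locales
    show "sigma_finite_measure \<mu>" by unfold_locales
    show "sets (\<mu> \<Otimes>\<^sub>M \<mu>) = sets (distr (\<mu> \<Otimes>\<^sub>M (G \<Otimes>\<^sub>M \<mu>)) (\<mu> \<Otimes>\<^sub>M \<mu>) (\<lambda>q. (fst q, (snd (snd q))(n := fst (snd q)))))"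
      by simp
    fix A B assume A: "A \<in> sets \<mu>" and B: "B \<in> sets \<mu>"
    have pre: "(\<lambda>q. (fst q, (snd (snd q))(n := fst (snd q)))) -` (A \<times> B) \<inter> space (\<mu> \<Otimes>\<^sub>M (G \<Otimes>\<^sub>M \<mu>))
        = A \<times> ((\<lambda>q. (snd q)(n := fst q)) -` B \<inter> space (G \<Otimes>\<^sub>M \<mu>))"
      using sets.sets_into_space[OF A] by (auto simp: space_pair_measure)
    have "emeasure (distr (\<mu> \<Otimes>\<^sub>M (G \<Otimes>\<^sub>M \<mu>)) (\<mu> \<Otimes>\<^sub>M \<mu>) (\<lambda>q. (fst q, (snd (snd q))(n := fst (snd q))))) (A \<times> B)
       = emeasure (\<mu> \<Otimes>\<^sub>M (G \<Otimes>\<^sub>M \<mu>)) (A \<times> ((\<lambda>q. (snd q)(n := fst q)) -` B \<inter> space (G \<Otimes>\<^sub>M \<mu>)))"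
      using A B by (simp add: emeasure_distr[OF T] pre)
    also have "\<dots> = emeasure \<mu> A * emeasure (G \<Otimes>\<^sub>M \<mu>) ((\<lambda>q. (snd q)(n := fst q)) -` B \<inter> space (G \<Otimes>\<^sub>M \<mu>))"
      using A measurable_sets[OF U B] by (rule sigma_finite_measure.emeasure_pair_measure_Times[OF prob_space_imp_sigma_finite[OF Gmu.prob_space_axioms]])
    also have "emeasure (G \<Otimes>\<^sub>M \<mu>) ((\<lambda>q. (snd q)(n := fst q)) -` B \<inter> space (G \<Otimes>\<^sub>M \<mu>)) = emeasure \<mu> B"
      using B by (subst (2) base[symmetric]) (simp add: emeasure_distr[OF U])
    finally show "emeasure \<mu> A * emeasure \<mu> B = emeasure (distr (\<mu> \<Otimes>\<^sub>M (G \<Otimes>\<^sub>M \<mu>)) (\<mu> \<Otimes>\<^sub>M \<mu>) (\<lambda>q. (fst q, (snd (snd q))(n := fst (snd q))))) (A \<times> B)"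
      by (rule sym)
  qed
  then show ?thesis unfolding \<mu>_def G_def .
qed

lemma cmax_nonneg: "l \<noteq> [] \<Longrightarrow> \<forall>k. 0 \<le> x k \<Longrightarrow> 0 \<le> cmax l x"
proof -
  assume l: "l \<noteq> []" and x: "\<forall>k. 0 \<le> x k"
  have "x (hd l) \<le> Max (x ` set l)" using l by (intro Max_ge) auto
  then show ?thesis using x[rule_format, of "hd l"] unfolding cmax_def by linarith
qed

lemma Phi_ns:
  assumes g: "good_density g" and l: "distinct l"
  shows "n \<le> length l \<Longrightarrow> N \<in> null_sets (iid_law g) \<Longrightarrow> AE p in iid_law g \<Otimes>\<^sub>M iid_law g. Phi l n p \<notin> N"
proof (induction n arbitrary: N)
  case 0
  interpret mu: prob_space "iid_law g" by (rule iid_prob[OF g])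
  interpret mumu: pair_prob_space "iid_law g" "iid_law g" ..
  have N: "N \<in> sets seq_space" using 0(2) sets_iid by (auto dest: null_setsD2)
  have f: "fst \<in> (iid_law g \<Otimes>\<^sub>M iid_law g) \<rightarrow>\<^sub>M seq_space"
    using measurable_fst meas_iid_iff by blast
  have "Phi l 0 = fst" by (auto simp: Phi_def fun_eq_iff)
  moreover have "AE p in iid_law g \<Otimes>\<^sub>M iid_law g. fst p \<notin> N"
  proof (rule mumu.AE_pair_measure)
    show "{x \<in> space (iid_law g \<Otimes>\<^sub>M iid_law g). fst x \<notin> N} \<in> sets (iid_law g \<Otimes>\<^sub>M iid_law g)"
      by (rule pred_notin[OF f N])
    show "AE x in iid_law g. AE y in iid_law g. fst (x, y) \<notin> N"
      using AE_not_in[OF 0(2)] by eventually_elim simp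
  qed
  ultimately show ?case by simp
next
  case (Suc n)
  have nl: "n < length l" using Suc(2) by simp
  have ns: "\<And>N. N \<in> null_sets (iid_law g) \<Longrightarrow> AE p in iid_law g \<Otimes>\<^sub>M iid_law g. Phi l n p \<notin> N"
    using Suc(1) nl by simp
  have c0: "AE x in iid_law g. 0 \<le> cmax l x"
    using AE_iid_nonneg[OF g] by eventually_elim (use nl in \<open>auto intro: cmax_nonneg\<close>)
  have A: "AE q in iid_law g \<Otimes>\<^sub>M (density lborel (\<lambda>u. ennreal (g u)) \<Otimes>\<^sub>M iid_law g).
           (Phi l n (fst q, snd (snd q)))(l ! n := cmax l (fst q) + fst (snd q)) \<notin> N"
    by (rule stepA[OF g Phi_meas cmax_meas_iid c0 ns Suc(3)])
  then have A': "AE q in iid_law g \<Otimes>\<^sub>M (density lborel (\<lambda>u. ennreal (g u)) \<Otimes>\<^sub>M iid_law g).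
           Phi l (Suc n) ((\<lambda>q. (fst q, (snd (snd q))(n := fst (snd q)))) q) \<notin> N"
    by eventually_elim (simp add: Phi_step[OF l nl])
  define G where "G = density lborel (\<lambda>u. ennreal (g u))"
  have sG: "sets G = sets borel" unfolding G_def by simp
  have fst1: "fst \<in> borel_measurable (G \<Otimes>\<^sub>M iid_law g)"
    by (subst measurable_cong_sets[OF refl sG, symmetric]) (rule measurable_fst)
  have snd2: "snd \<in> (G \<Otimes>\<^sub>M iid_law g) \<rightarrow>\<^sub>M seq_space" using measurable_snd meas_iid_iff by blast
  have U: "(\<lambda>q. (snd q)(n := fst q)) \<in> (G \<Otimes>\<^sub>M iid_law g) \<rightarrow>\<^sub>M iid_law g"
    unfolding meas_iid_iff by (intro meas_upd fst1 snd2)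
  have T: "(\<lambda>q. (fst q, (snd (snd q))(n := fst (snd q)))) \<in> (iid_law g \<Otimes>\<^sub>M (G \<Otimes>\<^sub>M iid_law g)) \<rightarrow>\<^sub>M (iid_law g \<Otimes>\<^sub>M iid_law g)"
    by (rule measurable_Pair[OF measurable_fst measurable_compose[OF measurable_snd U]])
  have Nset: "N \<in> sets seq_space" using Suc(3) sets_iid by (auto dest: null_setsD2)
  have "AE p in distr (iid_law g \<Otimes>\<^sub>M (G \<Otimes>\<^sub>M iid_law g)) (iid_law g \<Otimes>\<^sub>M iid_law g)
      (\<lambda>q. (fst q, (snd (snd q))(n := fst (snd q)))). Phi l (Suc n) p \<notin> N"
    apply (subst AE_distr_iff[OF T])
     apply (rule pred_notin[OF Phi_meas Nset])
    using A' unfolding G_def by simp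
  then show ?case unfolding G_def by (simp only: pair_split[OF g, of n, symmetric])
qed

lemma Ymap_Phi: "Ymap x z (Some l) = Phi l (length l) (x, z)"
  by (auto simp: Ymap_def Phi_def cmax_def posl_def fun_eq_iff)

lemma Phi_meas': "Phi l n \<in> (seq_space \<Otimes>\<^sub>M seq_space) \<rightarrow>\<^sub>M seq_space"
  using Phi_meas[of l n g] measurable_cong_sets[OF sets_pair_measure_cong[OF sets_iid sets_iid] refl, of g g seq_space]
  by simp

lemma Psi_meas:
  assumes idx: "idx \<in> seq_space \<rightarrow>\<^sub>M count_space UNIV"
  shows "(\<lambda>p. Ymap (fst p) (snd p) (idx (fst p))) \<in> (seq_space \<Otimes>\<^sub>M seq_space) \<rightarrow>\<^sub>M seq_space"
proof -
  have "(\<lambda>p. (\<lambda>L p. Ymap (fst p) (snd p) L) (idx (fst p)) p) \<in> (seq_space \<Otimes>\<^sub>M seq_space) \<rightarrow>\<^sub>M seq_space"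
  proof (rule measurable_compose_countable)
    fix L :: "nat list option"
    show "(\<lambda>p. Ymap (fst p) (snd p) L) \<in> (seq_space \<Otimes>\<^sub>M seq_space) \<rightarrow>\<^sub>M seq_space"
    proof (cases L)
      case None
      have "(\<lambda>p. Ymap (fst p) (snd p) None) = fst" by (simp add: fun_eq_iff Ymap_def)
      then show ?thesis using None by simp
    next
      case (Some l)
      then show ?thesis using Phi_meas'[of l "length l"] by (simp add: Ymap_Phi)
    qed
  next
    show "(\<lambda>p. idx (fst p)) \<in> (seq_space \<Otimes>\<^sub>M seq_space) \<rightarrow>\<^sub>M count_space UNIV"
      by (rule measurable_compose[OF measurable_fst idx])
  qed
  then show ?thesis by simp
qed

lemma pair_ac:
  assumes "prob_space \<nu>" "prob_space \<mu>" "sets \<nu> = sets \<mu>" "absolutely_continuous \<mu> \<nu>"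
    and R: "AE p in \<mu> \<Otimes>\<^sub>M \<mu>. R p"
  shows "AE p in \<nu> \<Otimes>\<^sub>M \<mu>. R p"
proof -
  interpret nu: prob_space \<nu> by fact
  interpret mu: prob_space \<mu> by fact
  interpret mumu: pair_prob_space \<mu> \<mu> ..
  interpret numu: pair_prob_space \<nu> \<mu> ..
  from R obtain N0 where N0: "{p\<in>space (\<mu> \<Otimes>\<^sub>M \<mu>). \<not> R p} \<subseteq> N0" "N0 \<in> null_sets (\<mu> \<Otimes>\<^sub>M \<mu>)"
    unfolding eventually_ae_filter by auto
  have ss: "sets (\<nu> \<Otimes>\<^sub>M \<mu>) = sets (\<mu> \<Otimes>\<^sub>M \<mu>)"
    by (rule sets_pair_measure_cong[OF assms(3) refl])
  have sp: "space (\<nu> \<Otimes>\<^sub>M \<mu>) = space (\<mu> \<Otimes>\<^sub>M \<mu>)"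
    by (rule sets_eq_imp_space_eq[OF ss])
  have "AE p in \<mu> \<Otimes>\<^sub>M \<mu>. p \<notin> N0" by (rule AE_not_in[OF N0(2)])
  then have "AE x in \<mu>. AE z in \<mu>. (x, z) \<notin> N0" by (rule mumu.AE_pair)
  then have "AE x in \<nu>. AE z in \<mu>. (x, z) \<notin> N0"
    by (rule absolutely_continuous_AE[OF assms(3) assms(4)])
  then have "AE p in \<nu> \<Otimes>\<^sub>M \<mu>. p \<notin> N0"
  proof (rule numu.AE_pair_measure[rotated])
    have "N0 \<in> sets (\<nu> \<Otimes>\<^sub>M \<mu>)" using N0(2) ss by (auto dest: null_setsD2)
    then have "space (\<nu> \<Otimes>\<^sub>M \<mu>) - N0 \<in> sets (\<nu> \<Otimes>\<^sub>M \<mu>)" by auto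
    moreover have "{x \<in> space (\<nu> \<Otimes>\<^sub>M \<mu>). x \<notin> N0} = space (\<nu> \<Otimes>\<^sub>M \<mu>) - N0" by auto
    ultimately show "{x \<in> space (\<nu> \<Otimes>\<^sub>M \<mu>). x \<notin> N0} \<in> sets (\<nu> \<Otimes>\<^sub>M \<mu>)" by simp
  qed
  then show ?thesis using AE_space
    by eventually_elim (use N0(1) sp in blast)
qed

theorem mainTheorem10:
  fixes M :: "'a measure" and g :: "real \<Rightarrow> real"
    and X Z :: "'a \<Rightarrow> nat \<Rightarrow> real"
    and idx :: "(nat \<Rightarrow> real) \<Rightarrow> nat list option"
  assumes "prob_space M"
    and "good_density g"
    and "Z \<in> M \<rightarrow>\<^sub>M seq_space"
    and "X \<in> M \<rightarrow>\<^sub>M seq_space"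
    and "distr M seq_space Z = iid_law g"
    and "prob_space.indep_var M seq_space X seq_space Z"
    and "absolutely_continuous (distr M seq_space Z) (distr M seq_space X)"
    and "idx \<in> seq_space \<rightarrow>\<^sub>M count_space UNIV"
    and "AE \<omega> in M. idx (X \<omega>) \<noteq> None"
    and "\<And>x l. idx x = Some l \<Longrightarrow> distinct l"
  shows "absolutely_continuous (distr M seq_space Z)
           (distr M seq_space (\<lambda>\<omega>. Ymap (X \<omega>) (Z \<omega>) (idx (X \<omega>))))"
proof -
  note g = assms(2)
  interpret P: prob_space M by fact
  define \<nu> where "\<nu> = distr M seq_space X"
  define \<mu> where "\<mu> = iid_law g"
  define \<Psi> where "\<Psi> = (\<lambda>p. Ymap (fst p) (snd p) (idx (fst p)))"
  have nu_prob: "prob_space \<nu>" unfolding \<nu>_def by (rule P.prob_space_distr[OF assms(4)])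
  have mu_prob: "prob_space \<mu>" unfolding \<mu>_def by (rule iid_prob[OF g])
  have snu: "sets \<nu> = sets \<mu>" unfolding \<nu>_def \<mu>_def using sets_iid by simp
  have ac: "absolutely_continuous \<mu> \<nu>" using assms(7) unfolding \<nu>_def \<mu>_def assms(5) .
  have joint: "distr M (seq_space \<Otimes>\<^sub>M seq_space) (\<lambda>\<omega>. (X \<omega>, Z \<omega>)) = \<nu> \<Otimes>\<^sub>M \<mu>"
    using assms(6) P.indep_var_distribution_eq[of seq_space X seq_space Z] unfolding \<nu>_def \<mu>_def assms(5)
    by simp
  have XZ: "(\<lambda>\<omega>. (X \<omega>, Z \<omega>)) \<in> M \<rightarrow>\<^sub>M (seq_space \<Otimes>\<^sub>M seq_space)"
    by (rule measurable_Pair[OF assms(4) assms(3)])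
  have Psi: "\<Psi> \<in> (seq_space \<Otimes>\<^sub>M seq_space) \<rightarrow>\<^sub>M seq_space"
    unfolding \<Psi>_def by (rule Psi_meas[OF assms(8)])
  have Y: "(\<lambda>\<omega>. Ymap (X \<omega>) (Z \<omega>) (idx (X \<omega>))) \<in> M \<rightarrow>\<^sub>M seq_space"
    using measurable_compose[OF XZ Psi] unfolding \<Psi>_def by simp
  show ?thesis unfolding absolutely_continuous_def
  proof
    fix N assume N: "N \<in> null_sets (distr M seq_space Z)"
    then have Nmu: "N \<in> null_sets \<mu>" unfolding \<mu>_def assms(5) .
    have Ns: "N \<in> sets seq_space" using N by (auto dest: null_setsD2)
    have R: "AE p in \<mu> \<Otimes>\<^sub>M \<mu>. \<forall>l. distinct l \<longrightarrow> Phi l (length l) p \<notin> N"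
      unfolding AE_all_countable \<mu>_def
      using Phi_ns[OF g _ le_refl Nmu[unfolded \<mu>_def]] by auto
    have "AE p in \<nu> \<Otimes>\<^sub>M \<mu>. \<forall>l. distinct l \<longrightarrow> Phi l (length l) p \<notin> N"
      by (rule pair_ac[OF nu_prob mu_prob snu ac R])
    then have "AE p in distr M (seq_space \<Otimes>\<^sub>M seq_space) (\<lambda>\<omega>. (X \<omega>, Z \<omega>)). \<forall>l. distinct l \<longrightarrow> Phi l (length l) p \<notin> N"
      unfolding joint .
    then have "AE \<omega> in M. \<forall>l. distinct l \<longrightarrow> Phi l (length l) (X \<omega>, Z \<omega>) \<notin> N"
      by (rule AE_distrD[OF XZ])
    then have "AE \<omega> in M. Ymap (X \<omega>) (Z \<omega>) (idx (X \<omega>)) \<notin> N"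
      using assms(9)
    proof eventually_elim
      case (elim \<omega>)
      then obtain l where l: "idx (X \<omega>) = Some l" by auto
      then show ?case using elim assms(10)[OF l] by (simp add: Ymap_Phi)
    qed
    then have "AE y in distr M seq_space (\<lambda>\<omega>. Ymap (X \<omega>) (Z \<omega>) (idx (X \<omega>))). y \<notin> N"
      by (subst AE_distr_iff[OF Y]) (use pred_notin[OF measurable_ident_sets[OF refl] Ns] in simp_all)
    then show "N \<in> null_sets (distr M seq_space (\<lambda>\<omega>. Ymap (X \<omega>) (Z \<omega>) (idx (X \<omega>))))"
      using Ns by (subst AE_iff_null_sets) simp_all
  qed
qed

end
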